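(* Let $d \geq 2$ and let $k, j, \ell \in \mathbb{Z}^d \setminus \{0\}$. If $|k| - |j| + |\ell| \neq 0$, then \[ \Big| \frac{1}{|k| - |j| + |\ell|} \Big| \leq C\, |j|^2 |\ell| . \] If $|k| - |j| - |\ell| \neq 0$, then \[ \Big| \frac{1}{|k| - |j| - |\ell|} \Big| \leq C\, |j|\, |\ell|\, (|j| + |\ell|). \] Here $C$ is a universal constant; $C = 27$ suffices.
   Context: $|\cdot|$ denotes the Euclidean norm on $\mathbb{Z}^d \subset \mathbb{R}^d$. *)

theory Defs
  imports "HOL-Analysis.Analysis"
begin

definition lnorm :: "int ^ 'n \<Rightarrow> real" where
  "lnorm k = norm (\<chi> i. real_of_int (k $ i))"

end

theory Submission
  imports Defs
begin

lemma zlem: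
  fixes z e :: real and m N :: int
  assumes "z = of_int m + e" "(of_int m + e) * (of_int m - e) = of_int N" "z \<noteq> 0"
  shows "\<bar>z\<bar> * (\<bar>z\<bar> + 2*\<bar>e\<bar> + 1) \<ge> 1"
proof (cases "N = 0")
  case True
  then have "of_int m - e = 0" using assms by simp
  then have "z = of_int (2*m)" using assms by simp
  then have "m \<noteq> 0" using assms by auto
  then have "\<bar>z\<bar> \<ge> 1" using \<open>z = of_int (2*m)\<close> by linarith
  then show ?thesis by (smt (verit) mult_le_cancel_left1)
next
  case False
  then have "\<bar>real_of_int N\<bar> \<ge> 1" by linarith
  then have h: "\<bar>z\<bar> * \<bar>of_int m - e\<bar> \<ge> 1" using assms by (simp add: abs_mult[symmetric])
  have "\<bar>of_int m - e\<bar> \<le> \<bar>z\<bar> + 2*\<bar>e\<bar> + 1" using assms by linarith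
  then have "\<bar>z\<bar> * \<bar>of_int m - e\<bar> \<le> \<bar>z\<bar> * (\<bar>z\<bar> + 2*\<bar>e\<bar> + 1)"
    by (simp add: mult_left_mono)
  then show ?thesis using h by linarith
qed

lemma inv_bound:
  fixes x P :: real
  assumes "\<bar>x\<bar> * P \<ge> 1" "P \<le> Q"
  shows "\<bar>1/x\<bar> \<le> Q"
proof -
  have "x \<noteq> 0" using assms by auto
  have "P > 0" using assms by (smt (verit) mult_nonneg_nonpos abs_ge_zero)
  have "1 \<le> \<bar>x\<bar> * P" by fact
  then have "1 / \<bar>x\<bar> \<le> P" using \<open>x \<noteq> 0\<close> by (simp add: divide_le_eq mult.commute)
  then show ?thesis using assms by simp
qed

lemma case1:
  fixes s t u :: real and a b c :: int
  assumes s1: "s \<ge> 1" and t1: "t \<ge> 1" and u1: "u \<ge> 1"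
    and sa: "s^2 = of_int a" and tb: "t^2 = of_int b" and uc: "u^2 = of_int c"
    and x0: "s - t + u \<noteq> 0"
  shows "\<bar>1 / (s - t + u)\<bar> \<le> 27 * t^2 * u"
proof (cases "\<bar>s - t + u\<bar> \<ge> 1")
  case True
  have "1 \<le> 27 * t^2 * u" using t1 u1
    by (smt (verit) mult_ge1_I one_le_power)
  then show ?thesis using inv_bound[of "s-t+u" 1] True by simp
next
  case False
  define y where "y = t - u"
  have yp: "y > 0" using False s1 y_def by linarith
  have sy: "s < t" using False u1 y_def by linarith
  define z where "z = (s - t + u) * (s + y)"
  have z2: "z = s^2 - t^2 - u^2 + 2*t*u" unfolding z_def y_def by (simp add: algebra_simps power2_eq_square)
  have zeq: "z = of_int (a - b - c) + 2*t*u" using z2 sa tb uc by simp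
  have N: "(of_int (a-b-c) + 2*t*u) * (of_int (a-b-c) - 2*t*u) = of_int ((a-b-c)^2 - 4*b*c)"
  proof -
    have "(of_int (a-b-c) + 2*t*u) * (of_int (a-b-c) - 2*t*u) = (of_int (a-b-c))^2 - 4*t^2*u^2"
      by (simp add: algebra_simps power2_eq_square)
    also have "\<dots> = of_int ((a-b-c)^2 - 4*b*c)" using tb uc by simp
    finally show ?thesis .
  qed
  have zn: "z \<noteq> 0" using x0 yp s1 unfolding z_def by simp
  have zl: "\<bar>z\<bar> * (\<bar>z\<bar> + 2*\<bar>2*t*u\<bar> + 1) \<ge> 1" using zlem[OF zeq N zn] .
  have tu: "\<bar>2*t*u\<bar> = 2*t*u" using t1 u1 by simp
  have az: "\<bar>z\<bar> = \<bar>s - t + u\<bar> * (s + y)" unfolding z_def using yp s1 by (simp add: abs_mult)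
  have zlt: "\<bar>z\<bar> \<le> s + y" using az False yp s1
    by (smt (verit) mult_le_cancel_right1)
  have "1 \<le> \<bar>z\<bar> * (\<bar>z\<bar> + 4*t*u + 1)" using zl tu by (simp add: mult.assoc)
  also have "\<dots> \<le> \<bar>z\<bar> * (s + y + 4*t*u + 1)" using zlt by (simp add: mult_left_mono)
  also have "\<dots> = \<bar>s - t + u\<bar> * ((s + y) * (s + y + 4*t*u + 1))" using az by simp
  finally have h1: "1 \<le> \<bar>s - t + u\<bar> * ((s + y) * (s + y + 4*t*u + 1))" .
  have A: "s + y \<le> 2*t" using sy y_def u1 by linarith
  have B: "s + y + 4*t*u + 1 \<le> 7*t*u"
  proof -
    have "t \<le> t*u" "1 \<le> t*u" using t1 u1 by (simp_all add: mult_ge1_I)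
    then show ?thesis using A by linarith
  qed
  have "(s + y) * (s + y + 4*t*u + 1) \<le> (2*t) * (7*t*u)"
    using A B yp s1 by (intro mult_mono) auto
  also have "\<dots> \<le> 27 * t^2 * u" using t1 u1 by (simp add: power2_eq_square)
  finally show ?thesis using inv_bound h1 by blast
qed

lemma case2:
  fixes s t u :: real and a b c :: int
  assumes s1: "s \<ge> 1" and t1: "t \<ge> 1" and u1: "u \<ge> 1"
    and sa: "s^2 = of_int a" and tb: "t^2 = of_int b" and uc: "u^2 = of_int c"
    and x0: "s - t - u \<noteq> 0"
  shows "\<bar>1 / (s - t - u)\<bar> \<le> 27 * t * u * (t + u)"
proof (cases "\<bar>s - t - u\<bar> \<ge> 1")
  case True
  have "1 \<le> t * u * (t + u)" using t1 u1
    by (smt (verit) mult_ge1_I)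
  then have "1 \<le> 27 * t * u * (t + u)" by simp
  then show ?thesis using inv_bound[of "s-t-u" 1] True by simp
next
  case False
  define y where "y = t + u"
  have yp: "y > 0" using t1 u1 y_def by linarith
  have sy: "s < y + 1" using False y_def by linarith
  define z where "z = (s - t - u) * (s + y)"
  have z2: "z = s^2 - t^2 - u^2 - 2*t*u" unfolding z_def y_def by (simp add: algebra_simps power2_eq_square)
  have zeq: "z = of_int (a - b - c) + (- 2*t*u)" using z2 sa tb uc by simp
  have N: "(of_int (a-b-c) + (- 2*t*u)) * (of_int (a-b-c) - (- 2*t*u)) = of_int ((a-b-c)^2 - 4*b*c)"
  proof -
    have "(of_int (a-b-c) + (- 2*t*u)) * (of_int (a-b-c) - (- 2*t*u)) = (of_int (a-b-c))^2 - 4*t^2*u^2"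
      by (simp add: algebra_simps power2_eq_square)
    also have "\<dots> = of_int ((a-b-c)^2 - 4*b*c)" using tb uc by simp
    finally show ?thesis .
  qed
  have zn: "z \<noteq> 0" using x0 yp s1 unfolding z_def by simp
  have zl: "\<bar>z\<bar> * (\<bar>z\<bar> + 2*\<bar>- 2*t*u\<bar> + 1) \<ge> 1" using zlem[OF zeq N zn] .
  have tu: "\<bar>- 2*t*u\<bar> = 2*t*u" using t1 u1 by simp
  have az: "\<bar>z\<bar> = \<bar>s - t - u\<bar> * (s + y)" unfolding z_def using yp s1 by (simp add: abs_mult)
  have zlt: "\<bar>z\<bar> \<le> s + y" using az False yp s1
    by (smt (verit) mult_le_cancel_right1)
  have "1 \<le> \<bar>z\<bar> * (\<bar>z\<bar> + 4*t*u + 1)" using zl tu by (simp add: mult.assoc)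
  also have "\<dots> \<le> \<bar>z\<bar> * (s + y + 4*t*u + 1)" using zlt by (simp add: mult_left_mono)
  also have "\<dots> = \<bar>s - t - u\<bar> * ((s + y) * (s + y + 4*t*u + 1))" using az by simp
  finally have h1: "1 \<le> \<bar>s - t - u\<bar> * ((s + y) * (s + y + 4*t*u + 1))" .
  have A0: "s + y \<le> 5/2 * t + 5/2 * u" using sy y_def t1 u1 by linarith
  have A: "s + y \<le> 5/2 * (t + u)" using A0 by (simp add: distrib_left)
  have B: "s + y + 4*t*u + 1 \<le> 10*t*u"
  proof -
    have "0 \<le> (t-1)*(u-1)" using t1 u1 by simp
    then have "t + u \<le> t*u + 1" by (simp add: algebra_simps)
    moreover have "1 \<le> t*u" using t1 u1 by (simp add: mult_ge1_I)
    ultimately show ?thesis using sy y_def t1 u1 by linarith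
  qed
  have "(s + y) * (s + y + 4*t*u + 1) \<le> (5/2 * (t + u)) * (10*t*u)"
    using A B yp s1 by (intro mult_mono) auto
  also have "\<dots> \<le> 27 * t * u * (t + u)"
  proof -
    have "0 \<le> t * u * (t + u)" using t1 u1 by simp
    then show ?thesis by (simp add: algebra_simps)
  qed
  finally show ?thesis using inv_bound h1 by blast
qed

lemma lnorm_sq: "lnorm k ^ 2 = of_int (\<Sum>i\<in>UNIV. (k $ i)^2)"
proof -
  have "lnorm k ^ 2 = (\<chi> i. real_of_int (k $ i)) \<bullet> (\<chi> i. real_of_int (k $ i))"
    unfolding lnorm_def by (simp add: power2_norm_eq_inner)
  also have "\<dots> = (\<Sum>i\<in>UNIV. real_of_int (k $ i) * real_of_int (k $ i))"
    by (simp add: inner_vec_def)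
  also have "\<dots> = of_int (\<Sum>i\<in>UNIV. (k $ i)^2)" by (simp add: power2_eq_square)
  finally show ?thesis .
qed

lemma lnorm_ge1:
  assumes "k \<noteq> 0" shows "lnorm k \<ge> 1"
proof -
  have nz: "(\<chi> i. real_of_int (k $ i)) \<noteq> 0"
    using assms by (auto simp: vec_eq_iff)
  then have pos: "lnorm k > 0" unfolding lnorm_def by simp
  have "lnorm k ^ 2 > 0" using pos by simp
  then have "real_of_int (\<Sum>i\<in>UNIV. (k $ i)^2) > 0" using lnorm_sq[of k] by linarith
  then have "(\<Sum>i\<in>UNIV. (k $ i)^2) \<ge> 1" by linarith
  then have "lnorm k ^ 2 \<ge> 1" using lnorm_sq[of k] by linarith
  show ?thesis
  proof (rule ccontr)
    assume "\<not> 1 \<le> lnorm k"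
    then have "lnorm k ^ 2 < 1 ^ 2" using pos by (intro power_strict_mono) auto
    then show False using \<open>lnorm k ^ 2 \<ge> 1\<close> by simp
  qed
qed

theorem lemma5p3:
  fixes k j l :: "int ^ 'n"
  assumes "CARD('n) \<ge> 2"
    and "k \<noteq> 0" and "j \<noteq> 0" and "l \<noteq> 0"
  shows "(lnorm k - lnorm j + lnorm l \<noteq> 0 \<longrightarrow>
            \<bar>1 / (lnorm k - lnorm j + lnorm l)\<bar> \<le> 27 * lnorm j ^ 2 * lnorm l)
       \<and> (lnorm k - lnorm j - lnorm l \<noteq> 0 \<longrightarrow>
            \<bar>1 / (lnorm k - lnorm j - lnorm l)\<bar> \<le> 27 * lnorm j * lnorm l * (lnorm j + lnorm l))"
  using case1[OF lnorm_ge1[OF assms(2)] lnorm_ge1[OF assms(3)] lnorm_ge1[OF assms(4)]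
      lnorm_sq lnorm_sq lnorm_sq]
    case2[OF lnorm_ge1[OF assms(2)] lnorm_ge1[OF assms(3)] lnorm_ge1[OF assms(4)]
      lnorm_sq lnorm_sq lnorm_sq]
  by blast

end
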